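(* Let $E$ be a finite-dimensional real affine space and let $G(E)$ be the set of generalized affine functions on $E$, equipped with the topology of pointwise convergence. Then $G(E)$ is a first countable topological space.
   Context: A generalized affine function on $E$ is a function $E\to\overline{\mathbb{R}}=\mathbb{R}\cup\{\pm\infty\}$ that is both convex and concave (extended-real-valued sense). The topology of pointwise convergence is the subspace topology from the product topology on $\overline{\mathbb{R}}^{E}$, with $\overline{\mathbb{R}}$ carrying its usual order topology. *)

theory Defs
  imports "HOL-Analysis.Analysis"
begin

definition ereal_convex :: "('a::real_vector \<Rightarrow> ereal) \<Rightarrow> bool" where
  "ereal_convex f \<longleftrightarrow> convex {(x, \<mu>::real). f x \<le> ereal \<mu>}"

definition ereal_concave :: "('a::real_vector \<Rightarrow> ereal) \<Rightarrow> bool" where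
  "ereal_concave f \<longleftrightarrow> convex {(x, \<mu>::real). ereal \<mu> \<le> f x}"

definition generalized_affine :: "('a::real_vector \<Rightarrow> ereal) set" where
  "generalized_affine = {f. ereal_convex f \<and> ereal_concave f}"

definition pointwise_topology_G :: "('a::real_vector \<Rightarrow> ereal) topology" where
  "pointwise_topology_G =
     subtopology (product_topology (\<lambda>_. (euclidean :: ereal topology)) UNIV) generalized_affine"

end

theory Submission
  imports Defs
begin


lemma dense_countable_subset:
  fixes P :: "'a::euclidean_space set"
  obtains Q where "countable Q" "Q \<subseteq> P" "P \<subseteq> closure Q"
proof -
  obtain \<B> :: "'a set set" where B0: "countable \<B>" "topological_basis \<B>"
    using ex_countable_basis by blast
  then have B: "countable \<B>" "\<And>C. C \<in> \<B> \<Longrightarrow> open C"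
       "\<And>S. open S \<Longrightarrow> \<exists>U. U \<subseteq> \<B> \<and> S = \<Union>U"
    unfolding topological_basis_def by auto
  define Q where "Q = (\<lambda>b. SOME y. y \<in> b \<inter> P) ` {b\<in>\<B>. b \<inter> P \<noteq> {}}"
  have sm: "(SOME y. y \<in> b \<inter> P) \<in> b \<inter> P" if "b \<inter> P \<noteq> {}" for b
  proof -
    from that obtain z where "z \<in> b \<inter> P" by blast
    then show ?thesis by (rule someI)
  qed
  have "countable Q" unfolding Q_def by (rule countable_image, rule countable_subset[OF _ B(1)]) blast
  moreover have "Q \<subseteq> P" unfolding Q_def using sm by blast
  moreover have "P \<subseteq> closure Q"
  proof
    fix x assume x: "x \<in> P"
    show "x \<in> closure Q"
      unfolding closure_approachable
    proof (intro allI impI)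
      fix e :: real assume e: "e > 0"
      obtain U where U: "U \<subseteq> \<B>" "ball x e = \<Union>U" using B(3)[OF open_ball[of x e]] by blast
      have "x \<in> \<Union>U" using e by (simp add: U(2)[symmetric])
      then obtain b where b: "b \<in> U" "x \<in> b" by blast
      then have bP: "b \<inter> P \<noteq> {}" using x by auto
      define y where "y = (SOME y. y \<in> b \<inter> P)"
      have "y \<in> b \<inter> P" unfolding y_def using bP sm by blast
      moreover have "b \<in> {b\<in>\<B>. b \<inter> P \<noteq> {}}" using b U bP by blast
      then have "y \<in> Q" unfolding Q_def y_def by (rule imageI)
      moreover have "y \<in> \<Union>U" using b \<open>y \<in> b \<inter> P\<close> by blast
      then have "y \<in> ball x e" using U(2) by simp
      then have "dist y x < e" by (simp add: dist_commute)
      ultimately show "\<exists>y\<in>Q. dist y x < e" by blast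
    qed
  qed
  ultimately show ?thesis using that by blast
qed

lemma relint_countable_hull:
  fixes P :: "'a::euclidean_space set"
  assumes "convex P"
  obtains Q where "countable Q" "Q \<subseteq> P" "rel_interior P \<subseteq> convex hull Q"
proof -
  obtain Q where Q: "countable Q" "Q \<subseteq> P" "P \<subseteq> closure Q" by (rule dense_countable_subset)
  define C where "C = convex hull Q"
  have CP: "C \<subseteq> P" unfolding C_def using Q(2) assms by (simp add: hull_minimal)
  have PC: "P \<subseteq> closure C" using Q(3) closure_mono[OF hull_subset[of Q convex]] C_def by blast
  have "affine hull P = affine hull (closure C)"
  proof -
    have "affine hull C \<subseteq> affine hull P" by (rule hull_mono[OF CP])
    moreover have "affine hull P \<subseteq> affine hull (closure C)" by (rule hull_mono[OF PC])
    ultimately show ?thesis by auto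
  qed
  then have "rel_interior P \<subseteq> rel_interior (closure C)" by (rule subset_rel_interior[OF PC])
  also have "\<dots> = rel_interior C" unfolding C_def by (simp add: convex_rel_interior_closure)
  also have "\<dots> \<subseteq> C" by (rule rel_interior_subset)
  finally show ?thesis using that Q C_def by blast
qed

lemma hemi_aux:
  fixes S P :: "'a::euclidean_space set"
  assumes "nat (aff_dim S + 1) = n" "affine S" "P \<subseteq> S" "convex P" "convex (S - P)"
  shows "\<exists>Q. countable Q \<and> Q \<subseteq> P \<and> P \<subseteq> convex hull Q"
  using assms
proof (induction n arbitrary: S P rule: less_induct)
  case (less n)
  note IH = less.IH
  show ?case
  proof (cases "P = {}")
    case True then show ?thesis by auto
  next
    case Pne: False
    define A where "A = affine hull P"
    have AS: "A \<subseteq> S" unfolding A_def using less.prems by (simp add: hull_minimal)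
    show ?thesis
    proof (cases "A = S")
      case False
      have h1: "affine hull A = A" unfolding A_def by (simp add: hull_hull)
      have h2: "affine hull S = S" using less.prems(2) by (rule hull_same)
      have "affine hull A \<subset> affine hull S" unfolding h1 h2 using AS False by blast
      then have "aff_dim A < aff_dim S" by (rule aff_dim_psubset)
      moreover have "aff_dim A \<ge> -1" by (simp add: aff_dim_geq)
      ultimately have lt: "nat (aff_dim A + 1) < n" using less.prems(1) by linarith
      have "A - P = A \<inter> (S - P)" using AS by auto
      then have "convex (A - P)" using less.prems(5) by (simp add: A_def convex_Int affine_imp_convex)
      moreover have "affine A" unfolding A_def by (rule affine_affine_hull)
      moreover have "P \<subseteq> A" unfolding A_def by (rule hull_subset)
      ultimately show ?thesis using IH[OF lt refl] less.prems(4) by blast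
    next
      case AeqS: True
      obtain Q1 where Q1: "countable Q1" "Q1 \<subseteq> P" "rel_interior P \<subseteq> convex hull Q1"
        using relint_countable_hull less.prems(4) by blast
      define R where "R = P - rel_interior P"
      have Rcl: "r \<in> closure (S - P)" if "r \<in> R" for r
      proof -
        have nb: "\<not> (\<exists>e>0. ball r e \<inter> affine hull P \<subseteq> P)" using that R_def mem_rel_interior_ball by blast
        show ?thesis unfolding closure_approachable
        proof (intro allI impI)
          fix e :: real assume "e > 0"
          then obtain y where y: "y \<in> ball r e" "y \<in> affine hull P" "y \<notin> P" using nb by blast
          then have "y \<in> S - P" using AeqS A_def by blast
          moreover have "dist y r < e" using y(1) by (simp add: dist_commute)
          ultimately show "\<exists>y\<in>S - P. dist y r < e" by blast
        qed
      qed
      have relcl: False if xr: "x \<in> rel_interior P" and xc: "x \<in> closure (S - P)" for x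
      proof -
        have "S = affine hull P" using AeqS A_def by simp
        moreover obtain e where "e > 0" "ball x e \<inter> affine hull P \<subseteq> P"
          using xr mem_rel_interior_ball[of x P] by blast
        ultimately have e: "e > 0" "ball x e \<inter> S \<subseteq> P" by auto
        then obtain y where "y \<in> S - P" "dist y x < e" using xc closure_approachable[of x "S - P"] by blast
        then show False using e by (auto simp: dist_commute)
      qed
      have convR: "convex R"
        unfolding convex_def
      proof (intro ballI allI impI)
        fix x y :: 'a and u v :: real
        assume xy: "x \<in> R" "y \<in> R" and uv: "0 \<le> u" "0 \<le> v" "u + v = 1"
        have "x \<in> P" "y \<in> P" using xy R_def by auto
        then have "u *\<^sub>R x + v *\<^sub>R y \<in> P" using uv less.prems(4) unfolding convex_def by blast
        moreover have "x \<in> closure (S - P)" "y \<in> closure (S - P)" using Rcl xy by auto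
        then have "u *\<^sub>R x + v *\<^sub>R y \<in> closure (S - P)"
          using uv convex_closure[OF less.prems(5)] unfolding convex_def by blast
        ultimately show "u *\<^sub>R x + v *\<^sub>R y \<in> R" using relcl R_def by blast
      qed
      show ?thesis
      proof (cases "R = {}")
        case True
        then have "P \<subseteq> convex hull Q1" using Q1 R_def by blast
        then show ?thesis using Q1 by blast
      next
        case Rne: False
        define A' where "A' = affine hull R"
        have RP: "R \<subseteq> P" unfolding R_def by auto
        have "A' \<subseteq> A" unfolding A'_def A_def using RP by (rule hull_mono)
        then have A'S: "A' \<subseteq> S" using AS by blast
        have A'neS: "A' \<noteq> S"
        proof
          assume eq: "A' = S"
          have "R \<subseteq> closure P" using RP closure_subset by blast
          moreover have "affine hull R = affine hull (closure P)"
          proof -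
            have "affine hull R = S" using eq unfolding A'_def .
            moreover have "affine hull (closure P) = S" using AeqS unfolding A_def by simp
            ultimately show ?thesis by simp
          qed
          ultimately have "rel_interior R \<subseteq> rel_interior (closure P)" by (rule subset_rel_interior)
          also have "\<dots> = rel_interior P" using less.prems(4) by (simp add: convex_rel_interior_closure)
          finally have "rel_interior R \<subseteq> rel_interior P" .
          moreover have "rel_interior R \<noteq> {}" using Rne convR rel_interior_eq_empty by blast
          moreover have "rel_interior R \<subseteq> R" by (rule rel_interior_subset)
          ultimately show False unfolding R_def by blast
        qed
        have h1: "affine hull A' = A'" unfolding A'_def by (simp add: hull_hull)
        have h2: "affine hull S = S" using less.prems(2) by (rule hull_same)
        have "affine hull A' \<subset> affine hull S" unfolding h1 h2 using A'S A'neS by blast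
        then have "aff_dim A' < aff_dim S" by (rule aff_dim_psubset)
        moreover have "aff_dim A' \<ge> -1" by (simp add: aff_dim_geq)
        ultimately have lt: "nat (aff_dim A' + 1) < n" using less.prems(1) by linarith
        have disj: "p \<notin> rel_interior P" if p: "p \<in> A'" for p
        proof
          assume pr: "p \<in> rel_interior P"
          have "rel_interior R \<noteq> {}" using Rne convR rel_interior_eq_empty by blast
          then obtain r where r: "r \<in> rel_interior R" by blast
          obtain e where e: "e > 0" "ball r e \<inter> A' \<subseteq> R" using r mem_rel_interior_ball[of r R] unfolding A'_def by blast
          have rR: "r \<in> R" using r rel_interior_subset by blast
          have "r \<noteq> p" using rR pr R_def by blast
          define t where "t = e / (2 * norm (r - p))"
          have np: "norm (r - p) > 0" using \<open>r \<noteq> p\<close> by simp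
          have t: "t > 0" unfolding t_def using e np by simp
          define r' where "r' = r + t *\<^sub>R (r - p)"
          have "dist r r' = t * norm (r - p)" unfolding r'_def using t by (simp add: dist_norm)
          also have "\<dots> = e / 2" unfolding t_def using np by simp
          finally have "dist r r' = e / 2" .
          then have "r' \<in> ball r e" using e by simp
          moreover have "r' \<in> A'"
          proof -
            have r'eq: "r' = (1 - (1 + t)) *\<^sub>R p + (1 + t) *\<^sub>R r" unfolding r'_def by (simp add: algebra_simps)
            have "r \<in> A'" unfolding A'_def using rR by (rule hull_inc)
            moreover have "affine A'" unfolding A'_def by (rule affine_affine_hull)
            ultimately have "(1 - (1 + t)) *\<^sub>R p + (1 + t) *\<^sub>R r \<in> A'" using p unfolding affine_alt by blast
            then show ?thesis using r'eq by simp
          qed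
          ultimately have "r' \<in> R" using e by blast
          then have "r' \<in> closure P" using RP closure_subset by blast
          then have "r' - (t / (1 + t)) *\<^sub>R (r' - p) \<in> rel_interior P"
          proof (rule rel_interior_closure_convex_shrink[OF less.prems(4) pr])
            show "0 < t / (1 + t)" using t by simp
            show "t / (1 + t) \<le> 1" using t by simp
          qed
          moreover have "r' - (t / (1 + t)) *\<^sub>R (r' - p) = r"
          proof -
            have "r' - p = (1 + t) *\<^sub>R (r - p)" unfolding r'_def by (simp add: algebra_simps)
            moreover have "(t / (1 + t)) * (1 + t) = t" using t by simp
            ultimately have "(t / (1 + t)) *\<^sub>R (r' - p) = t *\<^sub>R (r - p)" by simp
            then show ?thesis unfolding r'_def by simp
          qed
          ultimately show False using rR R_def by simp
        qed
        have "A' - R = A' \<inter> (S - P)" using disj A'S R_def by auto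
        then have cA'R: "convex (A' - R)" using less.prems(5) by (simp add: A'_def convex_Int affine_imp_convex)
        have RA': "R \<subseteq> A'" unfolding A'_def by (rule hull_subset)
        have aA': "affine A'" unfolding A'_def by (rule affine_affine_hull)
        obtain Q2 where Q2: "countable Q2" "Q2 \<subseteq> R" "R \<subseteq> convex hull Q2"
          using IH[OF lt refl aA' RA' convR cA'R] by blast
        have "P \<subseteq> convex hull Q1 \<union> convex hull Q2" using Q1 Q2 R_def by blast
        also have "\<dots> \<subseteq> convex hull (Q1 \<union> Q2)" by (simp add: hull_mono)
        finally show ?thesis using Q1 Q2 RP by (intro exI[of _ "Q1 \<union> Q2"]) auto
      qed
    qed
  qed
qed

lemma hemi:
  fixes S P :: "'a::euclidean_space set"
  assumes "affine S" "P \<subseteq> S" "convex P" "convex (S - P)"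
  shows "\<exists>Q. countable Q \<and> Q \<subseteq> P \<and> P \<subseteq> convex hull Q"
  using hemi_aux[OF refl assms] .




lemma ga_conv:
  assumes "f \<in> generalized_affine" "f y \<le> ereal a" "f z \<le> ereal b" "0 \<le> u" "0 \<le> v" "u + v = 1"
  shows "f (u *\<^sub>R y + v *\<^sub>R z) \<le> ereal (u * a + v * b)"
proof -
  have c: "convex {(x, \<mu>::real). f x \<le> ereal \<mu>}"
    using assms(1) by (simp add: generalized_affine_def ereal_convex_def)
  have m1: "(y, a) \<in> {(x, \<mu>::real). f x \<le> ereal \<mu>}" using assms(2,3) by simp
  have m2: "(z, b) \<in> {(x, \<mu>::real). f x \<le> ereal \<mu>}" using assms(2,3) by simp
  have "u *\<^sub>R (y, a) + v *\<^sub>R (z, b) \<in> {(x, \<mu>::real). f x \<le> ereal \<mu>}"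
    by (rule convexD[OF c m1 m2 assms(4-6)])
  moreover have "u *\<^sub>R (y, a) + v *\<^sub>R (z, b) = (u *\<^sub>R y + v *\<^sub>R z, u * a + v * b)"
    by (simp add: scaleR_prod_def)
  ultimately show ?thesis by simp
qed

lemma ga_conc:
  assumes "f \<in> generalized_affine" "ereal a \<le> f y" "ereal b \<le> f z" "0 \<le> u" "0 \<le> v" "u + v = 1"
  shows "ereal (u * a + v * b) \<le> f (u *\<^sub>R y + v *\<^sub>R z)"
proof -
  have c: "convex {(x, \<mu>::real). ereal \<mu> \<le> f x}"
    using assms(1) by (simp add: generalized_affine_def ereal_concave_def)
  have m1: "(y, a) \<in> {(x, \<mu>::real). ereal \<mu> \<le> f x}" using assms(2,3) by simp
  have m2: "(z, b) \<in> {(x, \<mu>::real). ereal \<mu> \<le> f x}" using assms(2,3) by simp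
  have "u *\<^sub>R (y, a) + v *\<^sub>R (z, b) \<in> {(x, \<mu>::real). ereal \<mu> \<le> f x}"
    by (rule convexD[OF c m1 m2 assms(4-6)])
  moreover have "u *\<^sub>R (y, a) + v *\<^sub>R (z, b) = (u *\<^sub>R y + v *\<^sub>R z, u * a + v * b)"
    by (simp add: scaleR_prod_def)
  ultimately show ?thesis by simp
qed

lemma ga_fin:
  assumes "f \<in> generalized_affine" "f y = ereal a" "f z = ereal b" "0 \<le> u" "0 \<le> v" "u + v = 1"
  shows "f (u *\<^sub>R y + v *\<^sub>R z) = ereal (u * a + v * b)"
proof (rule order_antisym)
  show "f (u *\<^sub>R y + v *\<^sub>R z) \<le> ereal (u * a + v * b)"
    by (rule ga_conv[OF assms(1) _ _ assms(4-6)]) (simp_all add: assms(2,3))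
  show "ereal (u * a + v * b) \<le> f (u *\<^sub>R y + v *\<^sub>R z)"
    by (rule ga_conc[OF assms(1) _ _ assms(4-6)]) (simp_all add: assms(2,3))
qed

lemma ga_pinf:
  assumes "f \<in> generalized_affine" "f y = \<infinity>" "ereal b \<le> f z" "0 < u" "0 \<le> v" "u + v = 1"
  shows "f (u *\<^sub>R y + v *\<^sub>R z) = \<infinity>"
proof (rule ccontr)
  assume ne: "f (u *\<^sub>R y + v *\<^sub>R z) \<noteq> \<infinity>"
  obtain c where c: "f (u *\<^sub>R y + v *\<^sub>R z) \<le> ereal c"
  proof (cases "f (u *\<^sub>R y + v *\<^sub>R z)")
    case (real r) then show ?thesis using that by auto
  next
    case PInf then show ?thesis using ne by simp
  next
    case MInf then show ?thesis using that[of 0] by simp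
  qed
  define a where "a = (c - v * b) / u + 1"
  have "ereal (u * a + v * b) \<le> f (u *\<^sub>R y + v *\<^sub>R z)"
    by (rule ga_conc[OF assms(1) _ assms(3) _ assms(5,6)]) (simp_all add: assms(2,4) less_imp_le[OF assms(4)])
  then have "ereal (u * a + v * b) \<le> ereal c" using c by (rule order_trans)
  then have "u * a + v * b \<le> c" by simp
  moreover have "u * a = c - v * b + u" unfolding a_def using assms(4) by (simp add: field_simps)
  then have "u * a + v * b = c + u" by simp
  ultimately show False using assms(4) by simp
qed

lemma ga_minf:
  assumes "f \<in> generalized_affine" "f y = -\<infinity>" "f z \<le> ereal b" "0 < u" "0 \<le> v" "u + v = 1"
  shows "f (u *\<^sub>R y + v *\<^sub>R z) = -\<infinity>"
proof (rule ccontr)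
  assume ne: "f (u *\<^sub>R y + v *\<^sub>R z) \<noteq> -\<infinity>"
  obtain c where c: "ereal c \<le> f (u *\<^sub>R y + v *\<^sub>R z)"
  proof (cases "f (u *\<^sub>R y + v *\<^sub>R z)")
    case (real r) then show ?thesis using that by auto
  next
    case MInf then show ?thesis using ne by simp
  next
    case PInf then show ?thesis using that[of 0] by simp
  qed
  define a where "a = (c - v * b) / u - 1"
  have "f (u *\<^sub>R y + v *\<^sub>R z) \<le> ereal (u * a + v * b)"
    by (rule ga_conv[OF assms(1) _ assms(3) _ assms(5,6)]) (simp_all add: assms(2,4) less_imp_le[OF assms(4)])
  with c have "ereal c \<le> ereal (u * a + v * b)" by (rule order_trans)
  then have "c \<le> u * a + v * b" by simp
  moreover have "u * a = c - v * b - u" unfolding a_def using assms(4) by (simp add: field_simps)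
  then have "u * a + v * b = c - u" by simp
  ultimately show False using assms(4) by simp
qed




definition Bas :: "ereal \<Rightarrow> nat \<Rightarrow> ereal set" where
  "Bas a = (SOME A. (\<forall>i. a \<in> A i \<and> open (A i)) \<and> (\<forall>S. open S \<and> a \<in> S \<longrightarrow> (\<exists>i. A i \<subseteq> S)))"

lemma Bas_prop:
  "(\<forall>i. a \<in> Bas a i \<and> open (Bas a i)) \<and> (\<forall>S. open S \<and> a \<in> S \<longrightarrow> (\<exists>i. Bas a i \<subseteq> S))"
proof -
  show ?thesis unfolding Bas_def by (rule someI_ex[OF first_countable_basis])
qed

definition nbh :: "('a::real_vector \<Rightarrow> ereal) \<Rightarrow> ('a \<times> nat) set \<Rightarrow> ('a \<Rightarrow> ereal) set" where
  "nbh f \<Phi> = {g \<in> generalized_affine. \<forall>p\<in>\<Phi>. g (fst p) \<in> Bas (f (fst p)) (snd p)}"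

definition detf :: "('a::real_vector \<Rightarrow> ereal) \<Rightarrow> 'a set \<Rightarrow> 'a \<Rightarrow> bool" where
  "detf f D x \<longleftrightarrow> (\<forall>U. open U \<longrightarrow> f x \<in> U \<longrightarrow>
      (\<exists>\<Phi>. finite \<Phi> \<and> \<Phi> \<subseteq> D \<times> UNIV \<and> (\<forall>g\<in>nbh f \<Phi>. g x \<in> U)))"

lemma nbh_Un: "nbh f (\<Phi>1 \<union> \<Phi>2) = nbh f \<Phi>1 \<inter> nbh f \<Phi>2"
  unfolding nbh_def by auto

lemma detE:
  assumes "detf f D x" "open U" "f x \<in> U"
  shows "\<exists>\<Phi>. finite \<Phi> \<and> \<Phi> \<subseteq> D \<times> UNIV \<and> (\<forall>g\<in>nbh f \<Phi>. g x \<in> U)"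
proof -
  have "\<forall>U. open U \<longrightarrow> f x \<in> U \<longrightarrow>
      (\<exists>\<Phi>. finite \<Phi> \<and> \<Phi> \<subseteq> D \<times> UNIV \<and> (\<forall>g\<in>nbh f \<Phi>. g x \<in> U))"
    using assms(1) unfolding detf_def .
  then show ?thesis using assms(2,3) by blast
qed

lemma det_base:
  assumes "x \<in> D" shows "detf f D x"
  unfolding detf_def
proof (intro allI impI)
  fix U assume U: "open U" "f x \<in> U"
  then obtain i where i: "Bas (f x) i \<subseteq> U" using Bas_prop[of "f x"] by blast
  have "\<forall>g\<in>nbh f {(x, i)}. g x \<in> U" using i unfolding nbh_def by auto
  moreover have "{(x, i)} \<subseteq> D \<times> UNIV" using assms by simp
  ultimately show "\<exists>\<Phi>. finite \<Phi> \<and> \<Phi> \<subseteq> D \<times> UNIV \<and> (\<forall>g\<in>nbh f \<Phi>. g x \<in> U)"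
    by (intro exI[of _ "{(x, i)}"]) simp
qed

lemma nbh_ga: "g \<in> nbh f \<Phi> \<Longrightarrow> g \<in> generalized_affine"
  unfolding nbh_def by simp

lemma det_fin:
  assumes f: "f \<in> generalized_affine" and dy: "detf f D y" and dz: "detf f D z"
    and fy: "f y = ereal a" and fz: "f z = ereal b" and uv: "0 \<le> u" "0 \<le> v" "u + v = 1"
  shows "detf f D (u *\<^sub>R y + v *\<^sub>R z)"
  unfolding detf_def
proof (intro allI impI)
  fix U assume U: "open U" "f (u *\<^sub>R y + v *\<^sub>R z) \<in> U"
  define c where "c = u * a + v * b"
  have fx: "f (u *\<^sub>R y + v *\<^sub>R z) = ereal c" unfolding c_def by (rule ga_fin[OF f fy fz uv])
  have "open (ereal -` U)" using U(1) by (rule open_ereal_vimage)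
  moreover have "c \<in> ereal -` U" using U(2) fx by simp
  ultimately have "\<exists>e>0. \<forall>t. dist t c < e \<longrightarrow> t \<in> ereal -` U"
    by (rule open_dist[THEN iffD1, rule_format])
  then obtain e where e0: "e > 0" "\<And>t. dist t c < e \<Longrightarrow> t \<in> ereal -` U" by blast
  have e: "e > 0" "\<And>t. dist t c < e \<Longrightarrow> ereal t \<in> U" using e0 by auto
  have W: "open {ereal (r - e) <..< ereal (r + e)}" "ereal r \<in> {ereal (r - e) <..< ereal (r + e)}" for r
    using e by auto
  obtain \<Phi>1 where P1: "finite \<Phi>1" "\<Phi>1 \<subseteq> D \<times> UNIV"
      "\<forall>g\<in>nbh f \<Phi>1. g y \<in> {ereal (a - e) <..< ereal (a + e)}"
  proof -
    have "f y \<in> {ereal (a - e) <..< ereal (a + e)}" by (simp add: fy e(1))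
    then show ?thesis using detE[OF dy W(1)[of a]] that by blast
  qed
  obtain \<Phi>2 where P2: "finite \<Phi>2" "\<Phi>2 \<subseteq> D \<times> UNIV"
      "\<forall>g\<in>nbh f \<Phi>2. g z \<in> {ereal (b - e) <..< ereal (b + e)}"
  proof -
    have "f z \<in> {ereal (b - e) <..< ereal (b + e)}" by (simp add: fz e(1))
    then show ?thesis using detE[OF dz W(1)[of b]] that by blast
  qed
  have "\<forall>g\<in>nbh f (\<Phi>1 \<union> \<Phi>2). g (u *\<^sub>R y + v *\<^sub>R z) \<in> U"
  proof
    fix g assume g: "g \<in> nbh f (\<Phi>1 \<union> \<Phi>2)"
    have g1: "g \<in> nbh f \<Phi>1" "g \<in> nbh f \<Phi>2" using g unfolding nbh_Un by auto
    have gy: "g y \<in> {ereal (a - e) <..< ereal (a + e)}" using P1(3) g1(1) by (rule bspec)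
    have gz: "g z \<in> {ereal (b - e) <..< ereal (b + e)}" using P2(3) g1(2) by (rule bspec)
    obtain t where t: "g y = ereal t" using gy by (cases "g y") auto
    obtain s where s: "g z = ereal s" using gz by (cases "g z") auto
    have ta: "\<bar>t - a\<bar> < e" using gy t by auto
    have sb: "\<bar>s - b\<bar> < e" using gz s by auto
    have gx: "g (u *\<^sub>R y + v *\<^sub>R z) = ereal (u * t + v * s)"
      by (rule ga_fin[OF nbh_ga[OF g] t s uv])
    have "u * \<bar>t - a\<bar> + v * \<bar>s - b\<bar> < e"
      using convex_bound_lt[OF ta sb uv] .
    moreover have "\<bar>(u * t + v * s) - c\<bar> \<le> u * \<bar>t - a\<bar> + v * \<bar>s - b\<bar>"
    proof -
      have "(u * t + v * s) - c = u * (t - a) + v * (s - b)" unfolding c_def by (simp add: algebra_simps)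
      also have "\<bar>\<dots>\<bar> \<le> \<bar>u * (t - a)\<bar> + \<bar>v * (s - b)\<bar>" by (rule abs_triangle_ineq)
      also have "\<dots> = u * \<bar>t - a\<bar> + v * \<bar>s - b\<bar>" using uv by (simp add: abs_mult)
      finally show ?thesis .
    qed
    ultimately have "dist (u * t + v * s) c < e" by (simp add: dist_real_def)
    then show "g (u *\<^sub>R y + v *\<^sub>R z) \<in> U" using e(2) gx by simp
  qed
  moreover have "finite (\<Phi>1 \<union> \<Phi>2)" "\<Phi>1 \<union> \<Phi>2 \<subseteq> D \<times> UNIV" using P1 P2 by auto
  ultimately show "\<exists>\<Phi>. finite \<Phi> \<and> \<Phi> \<subseteq> D \<times> UNIV \<and> (\<forall>g\<in>nbh f \<Phi>. g (u *\<^sub>R y + v *\<^sub>R z) \<in> U)"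
    by blast
qed

lemma det_pinf:
  assumes f: "f \<in> generalized_affine" and dy: "detf f D y" and dz: "detf f D z"
    and fy: "f y = \<infinity>" and fz: "f z \<noteq> -\<infinity>" and uv: "0 < u" "0 \<le> v" "u + v = 1"
  shows "detf f D (u *\<^sub>R y + v *\<^sub>R z)"
  unfolding detf_def
proof (intro allI impI)
  fix U assume U: "open U" "f (u *\<^sub>R y + v *\<^sub>R z) \<in> U"
  obtain b where b: "ereal b < f z"
  proof (cases "f z")
    case (real r) then show ?thesis using that[of "r - 1"] by simp
  next
    case PInf then show ?thesis using that[of 0] by simp
  next
    case MInf then show ?thesis using fz by simp
  qed
  have fx: "f (u *\<^sub>R y + v *\<^sub>R z) = \<infinity>"
    by (rule ga_pinf[OF f fy less_imp_le[OF b] uv])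
  have "\<infinity> \<in> U" using U(2) fx by simp
  then obtain M where M: "{ereal M <..} \<subseteq> U" using open_PInfty[OF U(1)] by blast
  define a where "a = (M - v * b) / u + 1"
  obtain \<Phi>1 where P1: "finite \<Phi>1" "\<Phi>1 \<subseteq> D \<times> UNIV"
      "\<forall>g\<in>nbh f \<Phi>1. g y \<in> {ereal a <..}"
  proof -
    have "f y \<in> {ereal a <..}" by (simp add: fy)
    then show ?thesis using detE[OF dy open_greaterThan[of "ereal a"]] that by blast
  qed
  obtain \<Phi>2 where P2: "finite \<Phi>2" "\<Phi>2 \<subseteq> D \<times> UNIV"
      "\<forall>g\<in>nbh f \<Phi>2. g z \<in> {ereal b <..}"
  proof -
    have "f z \<in> {ereal b <..}" by (simp add: b)
    then show ?thesis using detE[OF dz open_greaterThan[of "ereal b"]] that by blast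
  qed
  have "\<forall>g\<in>nbh f (\<Phi>1 \<union> \<Phi>2). g (u *\<^sub>R y + v *\<^sub>R z) \<in> U"
  proof
    fix g assume g: "g \<in> nbh f (\<Phi>1 \<union> \<Phi>2)"
    have g1: "g \<in> nbh f \<Phi>1" "g \<in> nbh f \<Phi>2" using g unfolding nbh_Un by auto
    have "g y \<in> {ereal a <..}" using P1(3) g1(1) by (rule bspec)
    then have gy: "ereal a \<le> g y" by simp
    have "g z \<in> {ereal b <..}" using P2(3) g1(2) by (rule bspec)
    then have gz: "ereal b \<le> g z" by simp
    have "ereal (u * a + v * b) \<le> g (u *\<^sub>R y + v *\<^sub>R z)"
      by (rule ga_conc[OF nbh_ga[OF g] gy gz less_imp_le[OF uv(1)] uv(2,3)])
    moreover have "ereal M < ereal (u * a + v * b)"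
    proof -
      have "u * a = M - v * b + u" unfolding a_def using uv(1) by (simp add: field_simps)
      then have "M < u * a + v * b" using uv(1) by simp
      then show ?thesis by simp
    qed
    ultimately have "ereal M < g (u *\<^sub>R y + v *\<^sub>R z)" by (rule less_le_trans[rotated])
    then show "g (u *\<^sub>R y + v *\<^sub>R z) \<in> U" using M by auto
  qed
  moreover have "finite (\<Phi>1 \<union> \<Phi>2)" "\<Phi>1 \<union> \<Phi>2 \<subseteq> D \<times> UNIV" using P1 P2 by auto
  ultimately show "\<exists>\<Phi>. finite \<Phi> \<and> \<Phi> \<subseteq> D \<times> UNIV \<and> (\<forall>g\<in>nbh f \<Phi>. g (u *\<^sub>R y + v *\<^sub>R z) \<in> U)"
    by blast
qed

lemma det_minf:
  assumes f: "f \<in> generalized_affine" and dy: "detf f D y" and dz: "detf f D z"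
    and fy: "f y = -\<infinity>" and fz: "f z \<noteq> \<infinity>" and uv: "0 < u" "0 \<le> v" "u + v = 1"
  shows "detf f D (u *\<^sub>R y + v *\<^sub>R z)"
  unfolding detf_def
proof (intro allI impI)
  fix U assume U: "open U" "f (u *\<^sub>R y + v *\<^sub>R z) \<in> U"
  obtain b where b: "f z < ereal b"
  proof (cases "f z")
    case (real r) then show ?thesis using that[of "r + 1"] by simp
  next
    case MInf then show ?thesis using that[of 0] by simp
  next
    case PInf then show ?thesis using fz by simp
  qed
  have fx: "f (u *\<^sub>R y + v *\<^sub>R z) = -\<infinity>"
    by (rule ga_minf[OF f fy less_imp_le[OF b] uv])
  have "-\<infinity> \<in> U" using U(2) fx by simp
  then obtain M where M: "{..< ereal M} \<subseteq> U" using open_MInfty[OF U(1)] by blast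
  define a where "a = (M - v * b) / u - 1"
  obtain \<Phi>1 where P1: "finite \<Phi>1" "\<Phi>1 \<subseteq> D \<times> UNIV"
      "\<forall>g\<in>nbh f \<Phi>1. g y \<in> {..< ereal a}"
  proof -
    have "f y \<in> {..< ereal a}" by (simp add: fy)
    then show ?thesis using detE[OF dy open_lessThan[of "ereal a"]] that by blast
  qed
  obtain \<Phi>2 where P2: "finite \<Phi>2" "\<Phi>2 \<subseteq> D \<times> UNIV"
      "\<forall>g\<in>nbh f \<Phi>2. g z \<in> {..< ereal b}"
  proof -
    have "f z \<in> {..< ereal b}" by (simp add: b)
    then show ?thesis using detE[OF dz open_lessThan[of "ereal b"]] that by blast
  qed
  have "\<forall>g\<in>nbh f (\<Phi>1 \<union> \<Phi>2). g (u *\<^sub>R y + v *\<^sub>R z) \<in> U"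
  proof
    fix g assume g: "g \<in> nbh f (\<Phi>1 \<union> \<Phi>2)"
    have g1: "g \<in> nbh f \<Phi>1" "g \<in> nbh f \<Phi>2" using g unfolding nbh_Un by auto
    have "g y \<in> {..< ereal a}" using P1(3) g1(1) by (rule bspec)
    then have gy: "g y \<le> ereal a" by simp
    have "g z \<in> {..< ereal b}" using P2(3) g1(2) by (rule bspec)
    then have gz: "g z \<le> ereal b" by simp
    have "g (u *\<^sub>R y + v *\<^sub>R z) \<le> ereal (u * a + v * b)"
      by (rule ga_conv[OF nbh_ga[OF g] gy gz less_imp_le[OF uv(1)] uv(2,3)])
    moreover have "ereal (u * a + v * b) < ereal M"
    proof -
      have "u * a = M - v * b - u" unfolding a_def using uv(1) by (simp add: field_simps)
      then have "u * a + v * b < M" using uv(1) by simp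
      then show ?thesis by simp
    qed
    ultimately have "g (u *\<^sub>R y + v *\<^sub>R z) < ereal M" by (rule le_less_trans)
    then show "g (u *\<^sub>R y + v *\<^sub>R z) \<in> U" using M by auto
  qed
  moreover have "finite (\<Phi>1 \<union> \<Phi>2)" "\<Phi>1 \<union> \<Phi>2 \<subseteq> D \<times> UNIV" using P1 P2 by auto
  ultimately show "\<exists>\<Phi>. finite \<Phi> \<and> \<Phi> \<subseteq> D \<times> UNIV \<and> (\<forall>g\<in>nbh f \<Phi>. g (u *\<^sub>R y + v *\<^sub>R z) \<in> U)"
    by blast
qed




lemma ga_not_minf_convex:
  assumes f: "f \<in> generalized_affine"
  shows "convex {x. f x \<noteq> -\<infinity>}"
proof (rule convexI)
  fix y z :: 'a and u v :: real
  assume y: "y \<in> {x. f x \<noteq> -\<infinity>}" and z: "z \<in> {x. f x \<noteq> -\<infinity>}" and uv: "0 \<le> u" "0 \<le> v" "u + v = 1"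
  obtain a where a: "ereal a \<le> f y" using y by (cases "f y") (auto intro: that[of 0])
  obtain b where b: "ereal b \<le> f z" using z by (cases "f z") (auto intro: that[of 0])
  have "ereal (u * a + v * b) \<le> f (u *\<^sub>R y + v *\<^sub>R z)" by (rule ga_conc[OF f a b uv])
  then show "u *\<^sub>R y + v *\<^sub>R z \<in> {x. f x \<noteq> -\<infinity>}" by auto
qed

lemma ga_not_pinf_convex:
  assumes f: "f \<in> generalized_affine"
  shows "convex {x. f x \<noteq> \<infinity>}"
proof (rule convexI)
  fix y z :: 'a and u v :: real
  assume y: "y \<in> {x. f x \<noteq> \<infinity>}" and z: "z \<in> {x. f x \<noteq> \<infinity>}" and uv: "0 \<le> u" "0 \<le> v" "u + v = 1"
  obtain a where a: "f y \<le> ereal a" using y by (cases "f y") (auto intro: that[of 0])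
  obtain b where b: "f z \<le> ereal b" using z by (cases "f z") (auto intro: that[of 0])
  have "f (u *\<^sub>R y + v *\<^sub>R z) \<le> ereal (u * a + v * b)" by (rule ga_conv[OF f a b uv])
  then show "u *\<^sub>R y + v *\<^sub>R z \<in> {x. f x \<noteq> \<infinity>}" by auto
qed

lemma ga_pinf_convex:
  assumes f: "f \<in> generalized_affine"
  shows "convex {x. f x = \<infinity>}"
proof (rule convexI)
  fix y z :: 'a and u v :: real
  assume y: "y \<in> {x. f x = \<infinity>}" and z: "z \<in> {x. f x = \<infinity>}" and uv: "0 \<le> u" "0 \<le> v" "u + v = 1"
  show "u *\<^sub>R y + v *\<^sub>R z \<in> {x. f x = \<infinity>}"
  proof (cases "u = 0")
    case True
    then have "v = 1" using uv by simp
    then show ?thesis using True z by simp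
  next
    case False
    then have "0 < u" using uv by simp
    moreover have "ereal 0 \<le> f z" using z by simp
    ultimately have "f (u *\<^sub>R y + v *\<^sub>R z) = \<infinity>" using ga_pinf[OF f _ _ _ uv(2,3)] y by simp
    then show ?thesis by simp
  qed
qed

lemma ga_minf_convex:
  assumes f: "f \<in> generalized_affine"
  shows "convex {x. f x = -\<infinity>}"
proof (rule convexI)
  fix y z :: 'a and u v :: real
  assume y: "y \<in> {x. f x = -\<infinity>}" and z: "z \<in> {x. f x = -\<infinity>}" and uv: "0 \<le> u" "0 \<le> v" "u + v = 1"
  show "u *\<^sub>R y + v *\<^sub>R z \<in> {x. f x = -\<infinity>}"
  proof (cases "u = 0")
    case True
    then have "v = 1" using uv by simp
    then show ?thesis using True z by simp
  next
    case False
    then have "0 < u" using uv by simp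
    moreover have "f z \<le> ereal 0" using z by simp
    ultimately have "f (u *\<^sub>R y + v *\<^sub>R z) = -\<infinity>" using ga_minf[OF f _ _ _ uv(2,3)] y by simp
    then show ?thesis by simp
  qed
qed

lemma det_set_pconvex:
  assumes f: "f \<in> generalized_affine"
  shows "convex {x. f x \<noteq> -\<infinity> \<and> detf f D x}"
proof (rule convexI)
  fix y z :: 'a and u v :: real
  assume y: "y \<in> {x. f x \<noteq> -\<infinity> \<and> detf f D x}" and z: "z \<in> {x. f x \<noteq> -\<infinity> \<and> detf f D x}"
    and uv: "0 \<le> u" "0 \<le> v" "u + v = 1"
  have fy: "f y \<noteq> -\<infinity>" and dy: "detf f D y" and fz: "f z \<noteq> -\<infinity>" and dz: "detf f D z"
    using y z by auto
  have fx: "f (u *\<^sub>R y + v *\<^sub>R z) \<noteq> -\<infinity>"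
    using ga_not_minf_convex[OF f] fy fz uv unfolding convex_def by blast
  have "detf f D (u *\<^sub>R y + v *\<^sub>R z)"
  proof (cases "f y = \<infinity>")
    case yinf: True
    show ?thesis
    proof (cases "u = 0")
      case True then have "v = 1" using uv by simp
      then show ?thesis using True dz by simp
    next
      case False then have "0 < u" using uv by simp
      then show ?thesis using det_pinf[OF f dy dz yinf fz _ uv(2,3)] by simp
    qed
  next
    case ynot: False
    show ?thesis
    proof (cases "f z = \<infinity>")
      case zinf: True
      show ?thesis
      proof (cases "v = 0")
        case True then have "u = 1" using uv by simp
        then show ?thesis using True dy by simp
      next
        case False then have "0 < v" using uv by simp
        then have "detf f D (v *\<^sub>R z + u *\<^sub>R y)"
          using det_pinf[OF f dz dy zinf fy _ uv(1)] uv(3) by simp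
        then show ?thesis by (simp add: add.commute)
      qed
    next
      case znot: False
      obtain a where a: "f y = ereal a" using fy ynot by (cases "f y") auto
      obtain b where b: "f z = ereal b" using fz znot by (cases "f z") auto
      show ?thesis by (rule det_fin[OF f dy dz a b uv])
    qed
  qed
  then show "u *\<^sub>R y + v *\<^sub>R z \<in> {x. f x \<noteq> -\<infinity> \<and> detf f D x}" using fx by simp
qed

lemma det_set_mconvex:
  assumes f: "f \<in> generalized_affine"
  shows "convex {x. f x \<noteq> \<infinity> \<and> detf f D x}"
proof (rule convexI)
  fix y z :: 'a and u v :: real
  assume y: "y \<in> {x. f x \<noteq> \<infinity> \<and> detf f D x}" and z: "z \<in> {x. f x \<noteq> \<infinity> \<and> detf f D x}"
    and uv: "0 \<le> u" "0 \<le> v" "u + v = 1"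
  have fy: "f y \<noteq> \<infinity>" and dy: "detf f D y" and fz: "f z \<noteq> \<infinity>" and dz: "detf f D z"
    using y z by auto
  have fx: "f (u *\<^sub>R y + v *\<^sub>R z) \<noteq> \<infinity>"
    using ga_not_pinf_convex[OF f] fy fz uv unfolding convex_def by blast
  have "detf f D (u *\<^sub>R y + v *\<^sub>R z)"
  proof (cases "f y = -\<infinity>")
    case yinf: True
    show ?thesis
    proof (cases "u = 0")
      case True then have "v = 1" using uv by simp
      then show ?thesis using True dz by simp
    next
      case False then have "0 < u" using uv by simp
      then show ?thesis using det_minf[OF f dy dz yinf fz _ uv(2,3)] by simp
    qed
  next
    case ynot: False
    show ?thesis
    proof (cases "f z = -\<infinity>")
      case zinf: True
      show ?thesis
      proof (cases "v = 0")
        case True then have "u = 1" using uv by simp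
        then show ?thesis using True dy by simp
      next
        case False then have "0 < v" using uv by simp
        then have "detf f D (v *\<^sub>R z + u *\<^sub>R y)"
          using det_minf[OF f dz dy zinf fy _ uv(1)] uv(3) by simp
        then show ?thesis by (simp add: add.commute)
      qed
    next
      case znot: False
      obtain a where a: "f y = ereal a" using fy ynot by (cases "f y") auto
      obtain b where b: "f z = ereal b" using fz znot by (cases "f z") auto
      show ?thesis by (rule det_fin[OF f dy dz a b uv])
    qed
  qed
  then show "u *\<^sub>R y + v *\<^sub>R z \<in> {x. f x \<noteq> \<infinity> \<and> detf f D x}" using fx by simp
qed

lemma all_det:
  fixes f :: "'a::euclidean_space \<Rightarrow> ereal"
  assumes f: "f \<in> generalized_affine"
  shows "\<exists>D. countable D \<and> (\<forall>x. detf f D x)"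
proof -
  have e1: "UNIV - {x. f x \<noteq> -\<infinity>} = {x. f x = -\<infinity>}" by auto
  have e2: "UNIV - {x. f x \<noteq> \<infinity>} = {x. f x = \<infinity>}" by auto
  obtain Q1 where Q1: "countable Q1" "Q1 \<subseteq> {x. f x \<noteq> -\<infinity>}" "{x. f x \<noteq> -\<infinity>} \<subseteq> convex hull Q1"
    using hemi[OF affine_UNIV subset_UNIV ga_not_minf_convex[OF f]] ga_minf_convex[OF f] e1 by auto
  obtain Q2 where Q2: "countable Q2" "Q2 \<subseteq> {x. f x \<noteq> \<infinity>}" "{x. f x \<noteq> \<infinity>} \<subseteq> convex hull Q2"
    using hemi[OF affine_UNIV subset_UNIV ga_not_pinf_convex[OF f]] ga_pinf_convex[OF f] e2 by auto
  define D where "D = Q1 \<union> Q2"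
  have "Q1 \<subseteq> {x. f x \<noteq> -\<infinity> \<and> detf f D x}" using Q1(2) det_base[of _ D f] D_def by auto
  then have "convex hull Q1 \<subseteq> {x. f x \<noteq> -\<infinity> \<and> detf f D x}"
    by (rule hull_minimal) (rule det_set_pconvex[OF f])
  then have p: "f x \<noteq> -\<infinity> \<Longrightarrow> detf f D x" for x using Q1(3) by blast
  have "Q2 \<subseteq> {x. f x \<noteq> \<infinity> \<and> detf f D x}" using Q2(2) det_base[of _ D f] D_def by auto
  then have "convex hull Q2 \<subseteq> {x. f x \<noteq> \<infinity> \<and> detf f D x}"
    by (rule hull_minimal) (rule det_set_mconvex[OF f])
  then have m: "f x \<noteq> \<infinity> \<Longrightarrow> detf f D x" for x using Q2(3) by blast
  have "detf f D x" for x using p m by (cases "f x") auto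
  moreover have "countable D" unfolding D_def using Q1 Q2 by simp
  ultimately show ?thesis by blast
qed




lemma open_nbh_set:
  assumes "finite \<Phi>"
  shows "openin (product_topology (\<lambda>_. (euclidean :: ereal topology)) UNIV)
           {g. \<forall>p\<in>\<Phi>. g (fst p) \<in> Bas (f (fst p)) (snd p)}"
  using assms
proof (induction rule: finite_induct)
  case empty
  have "openin (product_topology (\<lambda>_. (euclidean :: ereal topology)) UNIV)
          (topspace (product_topology (\<lambda>_. (euclidean :: ereal topology)) UNIV))"
    by (rule openin_topspace)
  then show ?case by simp
next
  case (insert p \<Phi>)
  have "openin (product_topology (\<lambda>_. (euclidean :: ereal topology)) UNIV)
     {g \<in> topspace (product_topology (\<lambda>_. (euclidean :: ereal topology)) UNIV). g (fst p) \<in> Bas (f (fst p)) (snd p)}"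
  proof (rule openin_continuous_map_preimage)
    show "continuous_map (product_topology (\<lambda>_. (euclidean :: ereal topology)) UNIV) euclidean (\<lambda>g. g (fst p))"
      using continuous_map_product_projection[of "fst p" UNIV "\<lambda>_. (euclidean :: ereal topology)"] by simp
    show "openin euclidean (Bas (f (fst p)) (snd p))"
      using Bas_prop[of "f (fst p)"] by (simp add: open_openin[symmetric])
  qed
  then have o1: "openin (product_topology (\<lambda>_. (euclidean :: ereal topology)) UNIV)
     {g. g (fst p) \<in> Bas (f (fst p)) (snd p)}" by simp
  have eq: "{g. \<forall>q\<in>insert p \<Phi>. g (fst q) \<in> Bas (f (fst q)) (snd q)} =
     {g. g (fst p) \<in> Bas (f (fst p)) (snd p)} \<inter> {g. \<forall>q\<in>\<Phi>. g (fst q) \<in> Bas (f (fst q)) (snd q)}"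
    by auto
  show ?case unfolding eq by (rule openin_Int[OF o1 insert.IH])
qed

theorem theorem3:
  shows "first_countable (pointwise_topology_G :: ('a::euclidean_space \<Rightarrow> ereal) topology)"
  unfolding first_countable_def
proof
  fix f :: "'a \<Rightarrow> ereal"
  let ?P = "product_topology (\<lambda>_. (euclidean :: ereal topology)) (UNIV :: 'a set)"
  have top: "topspace (pointwise_topology_G :: ('a \<Rightarrow> ereal) topology) = generalized_affine"
    unfolding pointwise_topology_G_def by simp
  assume "f \<in> topspace pointwise_topology_G"
  then have f: "f \<in> generalized_affine" using top by simp
  obtain D where D: "countable D" "\<And>x. detf f D x" using all_det[OF f] by blast
  define \<B> where "\<B> = nbh f ` {\<Phi>. finite \<Phi> \<and> \<Phi> \<subseteq> D \<times> UNIV}"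
  have "countable \<B>" unfolding \<B>_def
    by (rule countable_image, rule countable_Collect_finite_subset) (simp add: D(1))
  moreover have "\<forall>V\<in>\<B>. openin pointwise_topology_G V"
  proof
    fix V assume "V \<in> \<B>"
    then obtain \<Phi> where \<Phi>: "finite \<Phi>" "V = nbh f \<Phi>" unfolding \<B>_def by blast
    have "V = {g. \<forall>p\<in>\<Phi>. g (fst p) \<in> Bas (f (fst p)) (snd p)} \<inter> generalized_affine"
      unfolding \<Phi>(2) nbh_def by auto
    then show "openin pointwise_topology_G V"
      unfolding pointwise_topology_G_def openin_subtopology using open_nbh_set[OF \<Phi>(1)] by blast
  qed
  moreover have "\<forall>U. openin pointwise_topology_G U \<and> f \<in> U \<longrightarrow> (\<exists>V\<in>\<B>. f \<in> V \<and> V \<subseteq> U)"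
  proof (intro allI impI)
    fix U assume "openin pointwise_topology_G U \<and> f \<in> U"
    then obtain T where T: "openin ?P T" "U = T \<inter> generalized_affine" and fU: "f \<in> U"
      unfolding pointwise_topology_G_def openin_subtopology by blast
    have fT: "f \<in> T" using fU T by blast
    have "\<forall>x\<in>T. \<exists>W. finite {i \<in> UNIV. W i \<noteq> topspace (euclidean::ereal topology)} \<and>
                 (\<forall>i \<in> UNIV. openin euclidean (W i)) \<and> x \<in> Pi\<^sub>E UNIV W \<and> Pi\<^sub>E UNIV W \<subseteq> T"
      using T(1) unfolding openin_product_topology_alt .
    then have "\<exists>W. finite {i \<in> UNIV. W i \<noteq> topspace (euclidean::ereal topology)} \<and>
                 (\<forall>i \<in> UNIV. openin euclidean (W i)) \<and> f \<in> Pi\<^sub>E UNIV W \<and> Pi\<^sub>E UNIV W \<subseteq> T"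
      using fT by (rule bspec)
    then obtain W where W: "finite {i \<in> UNIV. W i \<noteq> topspace (euclidean::ereal topology)}"
      "\<forall>i\<in>UNIV. openin euclidean (W i)" "f \<in> Pi\<^sub>E UNIV W" "Pi\<^sub>E UNIV W \<subseteq> T"
      by blast
    define J where "J = {i. W i \<noteq> UNIV}"
    have eqJ: "{i \<in> UNIV. W i \<noteq> topspace (euclidean::ereal topology)} = J" unfolding J_def by simp
    from W(1) have J: "finite J" unfolding eqJ .
    have ex: "\<forall>i\<in>J. \<exists>\<Phi>. finite \<Phi> \<and> \<Phi> \<subseteq> D \<times> UNIV \<and> (\<forall>g\<in>nbh f \<Phi>. g i \<in> W i)"
    proof
      fix i assume "i \<in> J"
      have "open (W i)" using W(2) by simp
      moreover have "f i \<in> W i" using W(3) by auto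
      ultimately show "\<exists>\<Phi>. finite \<Phi> \<and> \<Phi> \<subseteq> D \<times> UNIV \<and> (\<forall>g\<in>nbh f \<Phi>. g i \<in> W i)"
        by (rule detE[OF D(2)])
    qed
    then obtain \<Psi> where \<Psi>: "\<forall>i\<in>J. finite (\<Psi> i) \<and> \<Psi> i \<subseteq> D \<times> UNIV \<and> (\<forall>g\<in>nbh f (\<Psi> i). g i \<in> W i)"
      by (rule bchoice_iff[THEN iffD1, elim_format]) blast
    define \<Phi> where "\<Phi> = \<Union> (\<Psi> ` J)"
    have fin: "finite \<Phi>" unfolding \<Phi>_def using J \<Psi> by blast
    have sub: "\<Phi> \<subseteq> D \<times> UNIV" unfolding \<Phi>_def using \<Psi> by blast
    have "nbh f \<Phi> \<in> \<B>" unfolding \<B>_def using fin sub by blast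
    moreover have "f \<in> nbh f \<Phi>" unfolding nbh_def using f Bas_prop by blast
    moreover have "nbh f \<Phi> \<subseteq> U"
    proof
      fix g assume g: "g \<in> nbh f \<Phi>"
      have "g i \<in> W i" for i
      proof (cases "i \<in> J")
        case True
        have "nbh f \<Phi> \<subseteq> nbh f (\<Psi> i)" unfolding nbh_def \<Phi>_def using True by blast
        then show ?thesis using g True \<Psi> by blast
      next
        case False then show ?thesis unfolding J_def by simp
      qed
      then have "g \<in> Pi\<^sub>E UNIV W" by (simp add: PiE_UNIV_domain)
      then have "g \<in> T" using W(4) by blast
      moreover have "g \<in> generalized_affine" using g by (rule nbh_ga)
      ultimately show "g \<in> U" using T(2) by blast
    qed
    ultimately show "\<exists>V\<in>\<B>. f \<in> V \<and> V \<subseteq> U" by blast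
  qed
  ultimately show "\<exists>\<B>. countable \<B> \<and> (\<forall>V\<in>\<B>. openin pointwise_topology_G V) \<and>
             (\<forall>U. openin pointwise_topology_G U \<and> f \<in> U \<longrightarrow> (\<exists>V\<in>\<B>. f \<in> V \<and> V \<subseteq> U))"
    by blast
qed


end
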